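(* Fix an epoch $\ell$ of the UCB-like policy described in the context and suppose that for every $S\subseteq\mathcal N$ and every $b\in(0,1)^N$, with $B(S\mid v)=\sum_{i\in S}b(i)\varphi(i,S\mid v)$, $$B(S\mid\hat v^\ell)-\sum_{i\in S}b(i)\varepsilon(n_i^{\ell-1})\le B(S\mid v^* )\le B(S\mid\hat v^\ell)+\sum_{i\in S}b(i)\varepsilon(n_i^{\ell-1}).$$ Then $OPT(\text{UCB-LP}(\hat v^\ell,n^{\ell-1},\omega))\ge(1-\omega)\,OPT(LP(v^* ))$.
   Context: $N$ products $\mathcal N=\{1,\dots,N\}$, $K$ resources $\mathcal K$; revenues $r(i)\in[0,1]$, consumptions $a(i,k)\in[0,1]$, $c(k)>0$. MNL probabilities: $\varphi(i,S\mid v)=v_i/(1+\sum_{j\in S}v_j)$ for $i\in S\subseteq\mathcal N$, $v\in\mathbb R_{>0}^N$. $v^*$ is the true preference vector. $LP(v)$: maximize $\sum_{S\subseteq\mathcal N}\sum_{i\in S}r(i)\varphi(i,S\mid v)y(S)$ subject to $\sum_S\sum_{i\in S}a(i,k)\varphi(i,S\mid v)y(S)\le c(k)$ for all $k$, $\sum_S y(S)=1$, $y\ge0$ (the sum over $S$ includes $S=\emptyset$); $OPT(\cdot)$ denotes an optimal value. In epoch $\ell$ of the policy, $\hat v^\ell\in\mathbb R_{>0}^N$ is the current MLE, $n_i^{\ell-1}\ge1$ is the number of past periods in which product $i$ was offered, $\varepsilon(n)=(\sqrt N+1)\Psi/\sqrt n$ for a constant $\Psi>0$, and $\omega\in[0,1]$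 is a tightening parameter. UCB-LP$(\hat v^\ell,n^{\ell-1},\omega)$: maximize $\sum_S\sum_{i\in S}r(i)\big(\varphi(i,S\mid\hat v^\ell)+\varepsilon(n_i^{\ell-1})\big)y(S)$ subject to $\sum_S\sum_{i\in S}a(i,k)\big(\varphi(i,S\mid\hat v^\ell)-\varepsilon(n_i^{\ell-1})\big)y(S)\le(1-\omega)c(k)$ for all $k$, $\sum_S y(S)=1$, $y\ge0$. *)

theory Defs
  imports Complex_Main
begin

text \<open>Products are 1..N, subsets S range over Pow {1..N}; an LP solution is
  y :: nat set \<Rightarrow> real, only its values on Pow {1..N} matter.\<close>

definition mnl :: "(nat \<Rightarrow> real) \<Rightarrow> nat \<Rightarrow> nat set \<Rightarrow> real" where
  "mnl v i S = v i / (1 + (\<Sum>j\<in>S. v j))"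

definition eps :: "nat \<Rightarrow> real \<Rightarrow> nat \<Rightarrow> real" where
  "eps N \<Psi> n = (sqrt (real N) + 1) * \<Psi> / sqrt (real n)"

definition LP_obj :: "nat \<Rightarrow> (nat \<Rightarrow> real) \<Rightarrow> (nat \<Rightarrow> real) \<Rightarrow> (nat set \<Rightarrow> real) \<Rightarrow> real" where
  "LP_obj N r v y = (\<Sum>S\<in>Pow {1..N}. \<Sum>i\<in>S. r i * mnl v i S * y S)"

definition LP_feas :: "nat \<Rightarrow> 'k set \<Rightarrow> (nat \<Rightarrow> 'k \<Rightarrow> real) \<Rightarrow> ('k \<Rightarrow> real)
    \<Rightarrow> (nat \<Rightarrow> real) \<Rightarrow> (nat set \<Rightarrow> real) \<Rightarrow> bool" where
  "LP_feas N K a c v y \<longleftrightarrow>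
     (\<forall>S\<in>Pow {1..N}. y S \<ge> 0) \<and> (\<Sum>S\<in>Pow {1..N}. y S) = 1 \<and>
     (\<forall>k\<in>K. (\<Sum>S\<in>Pow {1..N}. \<Sum>i\<in>S. a i k * mnl v i S * y S) \<le> c k)"

definition OPT_LP :: "nat \<Rightarrow> 'k set \<Rightarrow> (nat \<Rightarrow> real) \<Rightarrow> (nat \<Rightarrow> 'k \<Rightarrow> real) \<Rightarrow> ('k \<Rightarrow> real)
    \<Rightarrow> (nat \<Rightarrow> real) \<Rightarrow> real" where
  "OPT_LP N K r a c v = Sup (LP_obj N r v ` {y. LP_feas N K a c v y})"

definition UCB_obj :: "nat \<Rightarrow> real \<Rightarrow> (nat \<Rightarrow> real) \<Rightarrow> (nat \<Rightarrow> real) \<Rightarrow> (nat \<Rightarrow> nat)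
    \<Rightarrow> (nat set \<Rightarrow> real) \<Rightarrow> real" where
  "UCB_obj N \<Psi> r vh n y =
     (\<Sum>S\<in>Pow {1..N}. \<Sum>i\<in>S. r i * (mnl vh i S + eps N \<Psi> (n i)) * y S)"

definition UCB_feas :: "nat \<Rightarrow> real \<Rightarrow> 'k set \<Rightarrow> (nat \<Rightarrow> 'k \<Rightarrow> real) \<Rightarrow> ('k \<Rightarrow> real)
    \<Rightarrow> (nat \<Rightarrow> real) \<Rightarrow> (nat \<Rightarrow> nat) \<Rightarrow> real \<Rightarrow> (nat set \<Rightarrow> real) \<Rightarrow> bool" where
  "UCB_feas N \<Psi> K a c vh n \<omega> y \<longleftrightarrow>
     (\<forall>S\<in>Pow {1..N}. y S \<ge> 0) \<and> (\<Sum>S\<in>Pow {1..N}. y S) = 1 \<and>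
     (\<forall>k\<in>K. (\<Sum>S\<in>Pow {1..N}. \<Sum>i\<in>S. a i k * (mnl vh i S - eps N \<Psi> (n i)) * y S)
              \<le> (1 - \<omega>) * c k)"

definition OPT_UCB :: "nat \<Rightarrow> real \<Rightarrow> 'k set \<Rightarrow> (nat \<Rightarrow> real) \<Rightarrow> (nat \<Rightarrow> 'k \<Rightarrow> real) \<Rightarrow> ('k \<Rightarrow> real)
    \<Rightarrow> (nat \<Rightarrow> real) \<Rightarrow> (nat \<Rightarrow> nat) \<Rightarrow> real \<Rightarrow> real" where
  "OPT_UCB N \<Psi> K r a c vh n \<omega> =
     Sup (UCB_obj N \<Psi> r vh n ` {y. UCB_feas N \<Psi> K a c vh n \<omega> y})"

end

theory Submission
  imports Defs
begin

lemma lin_ext: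
  fixes d b :: "nat \<Rightarrow> real"
  assumes S: "S \<subseteq> I" and H: "\<And>b. \<forall>i\<in>I. 0 < b i \<and> b i < 1 \<Longrightarrow> (\<Sum>i\<in>S. b i * d i) \<le> 0"
    and b: "\<forall>i\<in>I. 0 \<le> b i \<and> b i \<le> 1"
  shows "(\<Sum>i\<in>S. b i * d i) \<le> 0"
proof -
  let ?Lb = "\<Sum>i\<in>S. b i * d i" and ?Lh = "\<Sum>i\<in>S. (1/2) * d i"
  have ev: "\<forall>\<^sub>F t in at_right (0::real). (1-t) * ?Lb + t * ?Lh \<le> 0"
  proof -
    have "\<forall>\<^sub>F t in at_right (0::real). 0 < t \<and> t < 1"
      unfolding eventually_at_right_field by (intro exI[of _ 1]) auto
    then show ?thesis
    proof (rule eventually_mono)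
      fix t :: real assume t: "0 < t \<and> t < 1"
      have "\<forall>i\<in>I. 0 < (1-t) * b i + t/2 \<and> (1-t) * b i + t/2 < 1"
      proof
        fix i assume "i \<in> I"
        with b have "0 \<le> b i" "b i \<le> 1" by auto
        moreover have "(1-t) * b i \<le> 1 - t" using t \<open>b i \<le> 1\<close> by (simp add: mult_left_le)
        moreover have "0 \<le> (1-t) * b i" using t \<open>0 \<le> b i\<close> by simp
        ultimately show "0 < (1-t) * b i + t/2 \<and> (1-t) * b i + t/2 < 1" using t by linarith
      qed
      from H[OF this] have "(\<Sum>i\<in>S. ((1-t) * b i + t/2) * d i) \<le> 0" .
      moreover have "(\<Sum>i\<in>S. ((1-t) * b i + t/2) * d i) = (1-t) * ?Lb + t * ?Lh"
        by (simp add: sum.distrib[symmetric] sum_distrib_left algebra_simps)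
      ultimately show "(1-t) * ?Lb + t * ?Lh \<le> 0" by simp
    qed
  qed
  have lim: "((\<lambda>t. (1-t) * ?Lb + t * ?Lh) \<longlongrightarrow> (1-0) * ?Lb + 0 * ?Lh) (at_right (0::real))"
    by (intro tendsto_intros)
  show ?thesis
    using tendsto_le[OF _ tendsto_const lim ev] by simp
qed

theorem lemma4:
  fixes N :: nat and K :: "'k set" and r :: "nat \<Rightarrow> real" and a :: "nat \<Rightarrow> 'k \<Rightarrow> real"
    and c :: "'k \<Rightarrow> real" and vstar vh :: "nat \<Rightarrow> real" and n :: "nat \<Rightarrow> nat"
    and \<Psi> \<omega> :: real
  assumes "finite K"
    and "\<And>i. i \<in> {1..N} \<Longrightarrow> 0 \<le> r i \<and> r i \<le> 1"
    and "\<And>i k. i \<in> {1..N} \<Longrightarrow> k \<in> K \<Longrightarrow> 0 \<le> a i k \<and> a i k \<le> 1"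
    and "\<And>k. k \<in> K \<Longrightarrow> c k > 0"
    and "\<And>i. i \<in> {1..N} \<Longrightarrow> vstar i > 0"
    and "\<And>i. i \<in> {1..N} \<Longrightarrow> vh i > 0"
    and "\<And>i. i \<in> {1..N} \<Longrightarrow> n i \<ge> 1"
    and "\<Psi> > 0"
    and "0 \<le> \<omega>" and "\<omega> \<le> 1"
    and conc: "\<And>S b. S \<subseteq> {1..N} \<Longrightarrow> (\<forall>i\<in>{1..N}. 0 < b i \<and> b i < 1) \<Longrightarrow>
        (\<Sum>i\<in>S. b i * mnl vh i S) - (\<Sum>i\<in>S. b i * eps N \<Psi> (n i)) \<le> (\<Sum>i\<in>S. b i * mnl vstar i S)
        \<and> (\<Sum>i\<in>S. b i * mnl vstar i S) \<le> (\<Sum>i\<in>S. b i * mnl vh i S) + (\<Sum>i\<in>S. b i * eps N \<Psi> (n i))"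
  shows "OPT_UCB N \<Psi> K r a c vh n \<omega> \<ge> (1 - \<omega>) * OPT_LP N K r a c vstar"
  proof -
  note r = assms(2) and aa = assms(3) and cpos = assms(4) and vhp = assms(6)
  have epsnn: "\<And>i. 0 \<le> eps N \<Psi> (n i)"
    unfolding eps_def using \<open>\<Psi> > 0\<close> by simp
  have mnlnn: "\<And>i S. S \<subseteq> {1..N} \<Longrightarrow> i \<in> S \<Longrightarrow> 0 \<le> mnl vh i S \<and> mnl vh i S \<le> 1"
  proof -
    fix i S assume S: "S \<subseteq> {1..N}" and i: "i \<in> S"
    have fin: "finite S" using S finite_subset by blast
    have pos: "\<And>j. j \<in> S \<Longrightarrow> 0 < vh j" using S vhp by blast
    have "vh i \<le> (\<Sum>j\<in>S. vh j)"
      using member_le_sum[of i S vh] fin i pos by (simp add: less_imp_le)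
    moreover have "0 \<le> (\<Sum>j\<in>S. vh j)" using pos by (meson less_imp_le sum_nonneg)
    moreover have "0 < vh i" using pos i by blast
    ultimately show "0 \<le> mnl vh i S \<and> mnl vh i S \<le> 1"
      unfolding mnl_def by (simp add: divide_le_eq)
  qed
  have ext_low: "\<And>S (b :: nat \<Rightarrow> real). S \<subseteq> {1..N} \<Longrightarrow> \<forall>i\<in>{1..N}. 0 \<le> b i \<and> b i \<le> 1 \<Longrightarrow>
     (\<Sum>i\<in>S. b i * (mnl vh i S - eps N \<Psi> (n i))) \<le> (\<Sum>i\<in>S. b i * mnl vstar i S)"
  proof -
    fix S and b :: "nat \<Rightarrow> real" assume S: "S \<subseteq> {1..N}" and b: "\<forall>i\<in>{1..N}. 0 \<le> b i \<and> b i \<le> 1"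
    have "(\<Sum>i\<in>S. b i * (mnl vh i S - eps N \<Psi> (n i) - mnl vstar i S)) \<le> 0"
    proof (rule lin_ext[OF S _ b])
      fix b' :: "nat \<Rightarrow> real" assume "\<forall>i\<in>{1..N}. 0 < b' i \<and> b' i < 1"
      from conc[OF S this] show "(\<Sum>i\<in>S. b' i * (mnl vh i S - eps N \<Psi> (n i) - mnl vstar i S)) \<le> 0"
        by (simp add: sum_subtractf right_diff_distrib)
    qed
    then show "(\<Sum>i\<in>S. b i * (mnl vh i S - eps N \<Psi> (n i))) \<le> (\<Sum>i\<in>S. b i * mnl vstar i S)"
      by (simp add: sum_subtractf right_diff_distrib)
  qed
  have ext_up: "\<And>S (b :: nat \<Rightarrow> real). S \<subseteq> {1..N} \<Longrightarrow> \<forall>i\<in>{1..N}. 0 \<le> b i \<and> b i \<le> 1 \<Longrightarrow>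
     (\<Sum>i\<in>S. b i * mnl vstar i S) \<le> (\<Sum>i\<in>S. b i * (mnl vh i S + eps N \<Psi> (n i)))"
  proof -
    fix S and b :: "nat \<Rightarrow> real" assume S: "S \<subseteq> {1..N}" and b: "\<forall>i\<in>{1..N}. 0 \<le> b i \<and> b i \<le> 1"
    have "(\<Sum>i\<in>S. b i * (mnl vstar i S - mnl vh i S - eps N \<Psi> (n i))) \<le> 0"
    proof (rule lin_ext[OF S _ b])
      fix b' :: "nat \<Rightarrow> real" assume "\<forall>i\<in>{1..N}. 0 < b' i \<and> b' i < 1"
      from conc[OF S this] show "(\<Sum>i\<in>S. b' i * (mnl vstar i S - mnl vh i S - eps N \<Psi> (n i))) \<le> 0"
        by (simp add: sum_subtractf right_diff_distrib)
    qed
    then show "(\<Sum>i\<in>S. b i * mnl vstar i S) \<le> (\<Sum>i\<in>S. b i * (mnl vh i S + eps N \<Psi> (n i)))"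
      by (simp add: sum_subtractf right_diff_distrib distrib_left sum.distrib)
  qed
  have zero_if: "\<And>(f :: nat \<Rightarrow> nat set \<Rightarrow> real) w. (\<Sum>S\<in>Pow {1..N}. \<Sum>i\<in>S. f i S * (if S = {} then w else 0)) = 0"
    by (rule sum.neutral) auto
  have finP: "finite (Pow {1..N})" by simp
  have emP: "{} \<in> Pow {1..N}" by simp
  define y0 :: "nat set \<Rightarrow> real" where "y0 = (\<lambda>S. if S = {} then 1 else 0)"
  have sumy0: "(\<Sum>S\<in>Pow {1..N}. y0 S) = 1"
    unfolding y0_def by (subst sum.delta[OF finP]) simp
  have lpf0: "LP_feas N K a c vstar y0"
    unfolding LP_feas_def using sumy0 zero_if cpos by (auto simp: y0_def less_imp_le)
  have ucbf0: "UCB_feas N \<Psi> K a c vh n \<omega> y0"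
    unfolding UCB_feas_def using sumy0 zero_if cpos \<open>\<omega> \<le> 1\<close> by (auto simp: y0_def less_imp_le)
  have ucb0: "UCB_obj N \<Psi> r vh n y0 = 0"
    unfolding UCB_obj_def y0_def using zero_if by simp
  define C where "C = (\<Sum>i\<in>{1..N}. 1 + eps N \<Psi> (n i))"
  have bdd: "bdd_above (UCB_obj N \<Psi> r vh n ` {y. UCB_feas N \<Psi> K a c vh n \<omega> y})"
  proof (rule bdd_aboveI2)
    fix y assume "y \<in> {y. UCB_feas N \<Psi> K a c vh n \<omega> y}"
    then have yn: "\<forall>S\<in>Pow {1..N}. y S \<ge> 0" and y1: "(\<Sum>S\<in>Pow {1..N}. y S) = 1"
      unfolding UCB_feas_def by auto
    have "UCB_obj N \<Psi> r vh n y \<le> (\<Sum>S\<in>Pow {1..N}. C * y S)"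
      unfolding UCB_obj_def
    proof (rule sum_mono)
      fix S assume SP: "S \<in> Pow {1..N}"
      then have S: "S \<subseteq> {1..N}" by simp
      have "(\<Sum>i\<in>S. r i * (mnl vh i S + eps N \<Psi> (n i)) * y S) \<le> (\<Sum>i\<in>S. (1 + eps N \<Psi> (n i)) * y S)"
      proof (rule sum_mono)
        fix i assume i: "i \<in> S"
        have "r i * (mnl vh i S + eps N \<Psi> (n i)) \<le> 1 + eps N \<Psi> (n i)"
          using r[of i] mnlnn[OF S i] epsnn[of i] i S
          by (smt (verit, best) mult_left_le_one_le subsetD mult_nonneg_nonneg)
        then show "r i * (mnl vh i S + eps N \<Psi> (n i)) * y S \<le> (1 + eps N \<Psi> (n i)) * y S"
          using yn SP by (simp add: mult_right_mono)
      qed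
      also have "\<dots> = (\<Sum>i\<in>S. 1 + eps N \<Psi> (n i)) * y S" by (simp add: sum_distrib_right)
      also have "\<dots> \<le> C * y S" unfolding C_def
        using yn SP S epsnn by (intro mult_right_mono sum_mono2) (auto intro: add_nonneg_nonneg)
      finally show "(\<Sum>i\<in>S. r i * (mnl vh i S + eps N \<Psi> (n i)) * y S) \<le> C * y S" .
    qed
    also have "\<dots> = C" using y1 by (simp add: sum_distrib_left[symmetric])
    finally show "UCB_obj N \<Psi> r vh n y \<le> C" .
  qed
  have key: "\<And>y. LP_feas N K a c vstar y \<Longrightarrow> (1 - \<omega>) * LP_obj N r vstar y \<le> OPT_UCB N \<Psi> K r a c vh n \<omega>"
  proof -
    fix y assume "LP_feas N K a c vstar y"
    then have yn: "\<forall>S\<in>Pow {1..N}. y S \<ge> 0" and y1: "(\<Sum>S\<in>Pow {1..N}. y S) = 1"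
      and yc: "\<forall>k\<in>K. (\<Sum>S\<in>Pow {1..N}. \<Sum>i\<in>S. a i k * mnl vstar i S * y S) \<le> c k"
      unfolding LP_feas_def by auto
    define y' where "y' = (\<lambda>S. (1 - \<omega>) * y S + (if S = {} then \<omega> else 0))"
    have lin: "\<And>(f :: nat \<Rightarrow> nat set \<Rightarrow> real). (\<Sum>S\<in>Pow {1..N}. \<Sum>i\<in>S. f i S * y' S)
        = (1 - \<omega>) * (\<Sum>S\<in>Pow {1..N}. \<Sum>i\<in>S. f i S * y S)"
    proof -
      fix f :: "nat \<Rightarrow> nat set \<Rightarrow> real"
      have "(\<Sum>S\<in>Pow {1..N}. \<Sum>i\<in>S. f i S * y' S) = (\<Sum>S\<in>Pow {1..N}. \<Sum>i\<in>S. (1 - \<omega>) * (f i S * y S))"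
        by (intro sum.cong refl) (auto simp: y'_def)
      then show "?thesis f" by (simp add: sum_distrib_left)
    qed
    have "(\<Sum>S\<in>Pow {1..N}. y' S) = (1 - \<omega>) * (\<Sum>S\<in>Pow {1..N}. y S) + (\<Sum>S\<in>Pow {1..N}. (if S = {} then \<omega> else 0))"
      unfolding y'_def by (simp add: sum.distrib sum_distrib_left)
    also have "\<dots> = 1"
      using y1 by (subst sum.delta[OF finP]) simp
    finally have y'1: "(\<Sum>S\<in>Pow {1..N}. y' S) = 1" .
    have y'n: "\<forall>S\<in>Pow {1..N}. y' S \<ge> 0"
      using yn \<open>0 \<le> \<omega>\<close> \<open>\<omega> \<le> 1\<close> by (auto simp: y'_def)
    have y'c: "\<forall>k\<in>K. (\<Sum>S\<in>Pow {1..N}. \<Sum>i\<in>S. a i k * (mnl vh i S - eps N \<Psi> (n i)) * y' S) \<le> (1 - \<omega>) * c k"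
    proof
      fix k assume k: "k \<in> K"
      have "(\<Sum>S\<in>Pow {1..N}. \<Sum>i\<in>S. a i k * (mnl vh i S - eps N \<Psi> (n i)) * y S)
          \<le> (\<Sum>S\<in>Pow {1..N}. \<Sum>i\<in>S. a i k * mnl vstar i S * y S)"
      proof (rule sum_mono)
        fix S assume SP: "S \<in> Pow {1..N}"
        have "(\<Sum>i\<in>S. a i k * (mnl vh i S - eps N \<Psi> (n i))) * y S \<le> (\<Sum>i\<in>S. a i k * mnl vstar i S) * y S"
          using ext_low[of S "\<lambda>i. a i k"] aa k SP yn by (intro mult_right_mono) auto
        then show "(\<Sum>i\<in>S. a i k * (mnl vh i S - eps N \<Psi> (n i)) * y S) \<le> (\<Sum>i\<in>S. a i k * mnl vstar i S * y S)"
          by (simp add: sum_distrib_right)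
      qed
      also have "\<dots> \<le> c k" using yc k by blast
      finally show "(\<Sum>S\<in>Pow {1..N}. \<Sum>i\<in>S. a i k * (mnl vh i S - eps N \<Psi> (n i)) * y' S) \<le> (1 - \<omega>) * c k"
        unfolding lin using \<open>\<omega> \<le> 1\<close> by (simp add: mult_left_mono)
    qed
    have feas: "UCB_feas N \<Psi> K a c vh n \<omega> y'"
      unfolding UCB_feas_def using y'1 y'n y'c by blast
    have "LP_obj N r vstar y \<le> UCB_obj N \<Psi> r vh n y"
      unfolding LP_obj_def UCB_obj_def
    proof (rule sum_mono)
      fix S assume SP: "S \<in> Pow {1..N}"
      have "(\<Sum>i\<in>S. r i * mnl vstar i S) * y S \<le> (\<Sum>i\<in>S. r i * (mnl vh i S + eps N \<Psi> (n i))) * y S"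
        using ext_up[of S r] r SP yn by (intro mult_right_mono) auto
      then show "(\<Sum>i\<in>S. r i * mnl vstar i S * y S) \<le> (\<Sum>i\<in>S. r i * (mnl vh i S + eps N \<Psi> (n i)) * y S)"
        by (simp add: sum_distrib_right)
    qed
    then have "(1 - \<omega>) * LP_obj N r vstar y \<le> UCB_obj N \<Psi> r vh n y'"
      unfolding UCB_obj_def lin using \<open>\<omega> \<le> 1\<close> by (simp add: mult_left_mono UCB_obj_def)
    also have "\<dots> \<le> OPT_UCB N \<Psi> K r a c vh n \<omega>"
      unfolding OPT_UCB_def using feas bdd by (intro cSup_upper) auto
    finally show "(1 - \<omega>) * LP_obj N r vstar y \<le> OPT_UCB N \<Psi> K r a c vh n \<omega>" .
  qed
  show ?thesis
  proof (cases "\<omega> = 1")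
    case True
    have "0 \<le> OPT_UCB N \<Psi> K r a c vh n \<omega>"
      unfolding OPT_UCB_def using ucbf0 bdd ucb0 by (metis cSup_upper image_eqI mem_Collect_eq)
    then show ?thesis using True by simp
  next
    case False
    then have pos: "0 < 1 - \<omega>" using \<open>\<omega> \<le> 1\<close> by simp
    have "OPT_LP N K r a c vstar \<le> OPT_UCB N \<Psi> K r a c vh n \<omega> / (1 - \<omega>)"
      unfolding OPT_LP_def
    proof (rule cSup_least)
      show "LP_obj N r vstar ` {y. LP_feas N K a c vstar y} \<noteq> {}" using lpf0 by blast
    next
      fix x assume "x \<in> LP_obj N r vstar ` {y. LP_feas N K a c vstar y}"
      then obtain y where "LP_feas N K a c vstar y" "x = LP_obj N r vstar y" by blast
      with key pos show "x \<le> OPT_UCB N \<Psi> K r a c vh n \<omega> / (1 - \<omega>)"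
        by (simp add: le_divide_eq mult.commute)
    qed
    then show ?thesis using pos by (simp add: le_divide_eq mult.commute)
  qed
qed

end
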